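(* Let $\mathfrak{stl}_3(R)^\sharp$ be the Leibniz algebra over $K$ generated by symbols $X^\sharp_{ij}(a)$ ($a\in R$, $1\le i\ne j\le 3$) and the $K$-module $\mathcal U$, subject to: $X^\sharp_{ij}$ is $K$-linear in $a$; $[X^\sharp_{ij}(a),X^\sharp_{jk}(b)]=-[X^\sharp_{jk}(b),X^\sharp_{ij}(a)]=X^\sharp_{ik}(ab)$ for distinct $i,j,k$; $[X^\sharp_{ij}(a),\mathcal U]=0=[\mathcal U,X^\sharp_{ij}(a)]$; $[X^\sharp_{ij}(a),X^\sharp_{ij}(b)]=0$; $[X^\sharp_{ij}(a),X^\sharp_{ik}(b)]=\mathrm{sign}(j,k)(\overline{ab})^{(i)}$ and $[X^\sharp_{ij}(a),X^\sharp_{kj}(b)]=\mathrm{sign}(i,k)(\overline{ab})^{(-j)}$ for distinct $i,j,k$. Let $\widehat{\mathfrak{stl}}_3(R)=\mathcal U\oplus\mathfrak{stl}_3(R)$ with bracket $[(c,x),(c',y)]=(\psi(x,y),[x,y])$. Then the unique Leibniz algebra homomorphism $\rho:\mathfrak{stl}_3(R)^\sharp\to\widehat{\mathfrak{stl}}_3(R)$ with $\rho(X^\sharp_{ij}(a))=(0,X_{ij}(a))$ and $\rho(u)=(u,0)$ for $u\in\mathcal U$ is an isomorphism.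
   Context: $K$ unital commutative ring, $R$ unital associative $K$-algebra, free as $K$-module with basis containing $1$. Leibniz algebra: $K$-bilinear bracket with $[x,[y,z]]=[[x,y],z]-[[x,z],y]$. $\mathfrak{stl}_3(R)$: Leibniz algebra over $K$ generated by $X_{ij}(a)$, $a\in R$, $1\le i\ne j\le 3$, subject to $K$-linearity in $a$, $[X_{ij}(a),X_{jk}(b)]=X_{ik}(ab)$ and $[X_{ij}(a),X_{ki}(b)]=-X_{kj}(ba)$ for distinct $i,j,k$, $[X_{ij}(a),X_{kl}(b)]=0$ for $j\ne k$, $i\ne l$. $H$ is the $K$-span of all $[X_{ij}(a),X_{ji}(b)]$; $\mathfrak{stl}_3(R)=H\oplus\bigoplus_{i\ne j}X_{ij}(R)$ with $a\mapsto X_{ij}(a)$ injective. $R_3=R/(3R+R[R,R])$, $\bar a$ the class of $a$. $\mathcal U=R_3^6$ with coordinates indexed by $\{1,2,3,-1,-2,-3\}$; $\bar a^{(m)}$ is the element with coordinate $\bar a$ at index $m$, $0$ elsewhere. $\mathrm{sign}(m,n)=1$ if $m<n$, $-1$ if $m>n$. $\psi$ is the $K$-bilinear map with $\psi(X_{ij}(a),X_{ik}(b))=\mathrm{sign}(j,k)(\overline{ab})^{(i)}$, $\psi(X_{ij}(a),X_{kj}(b))=\mathrm{sign}(i,k)(\overline{ab})^{(-j)}$ for distinct $i,j,k$, $\psi=0$ on all other pairs $X_{ij}(a),X_{kl}(b)$ and whenever an argument lies in $H$; it is a Leibniz 2-cocycle. *)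

theory Defs
  imports Main "HOL.Modules" "HOL-Library.Function_Algebras" "HOL-Library.Product_Plus"
begin

definition leibniz ::
  "('k::comm_ring_1 \<Rightarrow> 'a::ab_group_add \<Rightarrow> 'a) \<Rightarrow> ('a \<Rightarrow> 'a \<Rightarrow> 'a) \<Rightarrow> bool" where
  "leibniz sc br \<longleftrightarrow> module sc
     \<and> (\<forall>x y z. br (x + y) z = br x z + br y z)
     \<and> (\<forall>x y z. br x (y + z) = br x y + br x z)
     \<and> (\<forall>c x y. br (sc c x) y = sc c (br x y))
     \<and> (\<forall>c x y. br x (sc c y) = sc c (br x y))
     \<and> (\<forall>x y z. br x (br y z) = br (br x y) z - br (br x z) y)"

definition leibniz_hom ::
  "('k::comm_ring_1 \<Rightarrow> 'a::ab_group_add \<Rightarrow> 'a) \<Rightarrow> ('a \<Rightarrow> 'a \<Rightarrow> 'a) \<Rightarrow>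
   ('k \<Rightarrow> 'b::ab_group_add \<Rightarrow> 'b) \<Rightarrow> ('b \<Rightarrow> 'b \<Rightarrow> 'b) \<Rightarrow> ('a \<Rightarrow> 'b) \<Rightarrow> bool" where
  "leibniz_hom sc br sc' br' f \<longleftrightarrow>
     (\<forall>x y. f (x + y) = f x + f y) \<and> (\<forall>c x. f (sc c x) = sc' c (f x))
     \<and> (\<forall>x y. f (br x y) = br' (f x) (f y))"

datatype ('g, 'k) lexpr =
    Gen 'g | Zero | Add "('g, 'k) lexpr" "('g, 'k) lexpr" | Neg "('g, 'k) lexpr"
  | Scl 'k "('g, 'k) lexpr" | Brk "('g, 'k) lexpr" "('g, 'k) lexpr"

primrec gens :: "('g, 'k) lexpr \<Rightarrow> 'g set" where
  "gens (Gen g) = {g}"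
| "gens Zero = {}"
| "gens (Add e f) = gens e \<union> gens f"
| "gens (Neg e) = gens e"
| "gens (Scl c e) = gens e"
| "gens (Brk e f) = gens e \<union> gens f"

primrec leval ::
  "('k \<Rightarrow> 'a::ab_group_add \<Rightarrow> 'a) \<Rightarrow> ('a \<Rightarrow> 'a \<Rightarrow> 'a) \<Rightarrow> ('g \<Rightarrow> 'a) \<Rightarrow> ('g, 'k) lexpr \<Rightarrow> 'a" where
  "leval sc br g (Gen x) = g x"
| "leval sc br g Zero = 0"
| "leval sc br g (Add e f) = leval sc br g e + leval sc br g f"
| "leval sc br g (Neg e) = - leval sc br g e"
| "leval sc br g (Scl c e) = sc c (leval sc br g e)"
| "leval sc br g (Brk e f) = br (leval sc br g e) (leval sc br g f)"

inductive lder :: "(('g, 'k::comm_ring_1) lexpr \<times> ('g, 'k) lexpr) set \<Rightarrow>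
                   ('g, 'k) lexpr \<Rightarrow> ('g, 'k) lexpr \<Rightarrow> bool"
  for E where
  rel: "(e, f) \<in> E \<Longrightarrow> lder E e f"
| refl: "lder E e e"
| sym: "lder E e f \<Longrightarrow> lder E f e"
| trans: "lder E e f \<Longrightarrow> lder E f h \<Longrightarrow> lder E e h"
| cong_add: "lder E e e' \<Longrightarrow> lder E f f' \<Longrightarrow> lder E (Add e f) (Add e' f')"
| cong_neg: "lder E e e' \<Longrightarrow> lder E (Neg e) (Neg e')"
| cong_scl: "lder E e e' \<Longrightarrow> lder E (Scl c e) (Scl c e')"
| cong_brk: "lder E e e' \<Longrightarrow> lder E f f' \<Longrightarrow> lder E (Brk e f) (Brk e' f')"
| add_assoc: "lder E (Add (Add e f) h) (Add e (Add f h))"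
| add_comm: "lder E (Add e f) (Add f e)"
| add_zero: "lder E (Add e Zero) e"
| add_neg: "lder E (Add e (Neg e)) Zero"
| scl_add: "lder E (Scl c (Add e f)) (Add (Scl c e) (Scl c f))"
| add_scl: "lder E (Scl (c + d) e) (Add (Scl c e) (Scl d e))"
| scl_scl: "lder E (Scl c (Scl d e)) (Scl (c * d) e)"
| scl_one: "lder E (Scl 1 e) e"
| brk_add_l: "lder E (Brk (Add e f) h) (Add (Brk e h) (Brk f h))"
| brk_add_r: "lder E (Brk e (Add f h)) (Add (Brk e f) (Brk e h))"
| brk_scl_l: "lder E (Brk (Scl c e) f) (Scl c (Brk e f))"
| brk_scl_r: "lder E (Brk e (Scl c f)) (Scl c (Brk e f))"
| leibniz_id: "lder E (Brk e (Brk f h)) (Add (Brk (Brk e f) h) (Neg (Brk (Brk e h) f)))"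

text \<open>This is exactly
the statement that the canonical map from the free Leibniz algebra on G modulo the
ideal generated by E is an isomorphism.\<close>

definition presents ::
  "('k::comm_ring_1 \<Rightarrow> 'a::ab_group_add \<Rightarrow> 'a) \<Rightarrow> ('a \<Rightarrow> 'a \<Rightarrow> 'a) \<Rightarrow> ('g \<Rightarrow> 'a) \<Rightarrow> 'g set \<Rightarrow>
   (('g, 'k) lexpr \<times> ('g, 'k) lexpr) set \<Rightarrow> bool" where
  "presents sc br g G E \<longleftrightarrow> leibniz sc br
     \<and> (\<forall>x. \<exists>e. gens e \<subseteq> G \<and> leval sc br g e = x)
     \<and> (\<forall>e f. gens e \<subseteq> G \<longrightarrow> gens f \<subseteq> G \<longrightarrow>
            (leval sc br g e = leval sc br g f \<longleftrightarrow> lder E e f))"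

definition ind3 :: "nat set" where "ind3 = {1, 2, 3}"

definition sign :: "nat \<Rightarrow> nat \<Rightarrow> 'a::ab_group_add \<Rightarrow> 'a" where
  "sign m n u = (if m < n then u else - u)"

text \<open>Index set {1,2,3,-1,-2,-3} of the coordinates of U = R_3^6.\<close>
datatype uidx = P1 | P2 | P3 | M1 | M2 | M3

definition upos :: "nat \<Rightarrow> uidx" where
  "upos i = (if i = 1 then P1 else if i = 2 then P2 else P3)"
definition uneg :: "nat \<Rightarrow> uidx" where
  "uneg i = (if i = 1 then M1 else if i = 2 then M2 else M3)"

definition uvec :: "uidx \<Rightarrow> 'q::zero \<Rightarrow> (uidx \<Rightarrow> 'q)" where
  "uvec m q = (\<lambda>n. if n = m then q else 0)"

definition uscale :: "('k \<Rightarrow> 'q \<Rightarrow> 'q) \<Rightarrow> 'k \<Rightarrow> (uidx \<Rightarrow> 'q) \<Rightarrow> (uidx \<Rightarrow> 'q)" where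
  "uscale scq c u = (\<lambda>m. scq c (u m))"

definition I3 :: "('k::comm_ring_1 \<Rightarrow> 'r::ring_1 \<Rightarrow> 'r) \<Rightarrow> 'r set" where
  "I3 scr = module.span scr ({3 * a | a. True} \<union> {r * (x * y - y * x) | r x y. True})"

definition stl_gens :: "(nat \<times> nat \<times> 'r) set" where
  "stl_gens = {(i, j, a). i \<in> ind3 \<and> j \<in> ind3 \<and> i \<noteq> j}"

definition stl_rels :: "('k::comm_ring_1 \<Rightarrow> 'r::ring_1 \<Rightarrow> 'r) \<Rightarrow>
     ((nat \<times> nat \<times> 'r, 'k) lexpr \<times> (nat \<times> nat \<times> 'r, 'k) lexpr) set" where
  "stl_rels scr =
     {(Gen (i, j, a + b), Add (Gen (i, j, a)) (Gen (i, j, b))) | i j a b.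
         i \<in> ind3 \<and> j \<in> ind3 \<and> i \<noteq> j}
   \<union> {(Gen (i, j, scr c a), Scl c (Gen (i, j, a))) | i j c a.
         i \<in> ind3 \<and> j \<in> ind3 \<and> i \<noteq> j}
   \<union> {(Brk (Gen (i, j, a)) (Gen (j, k, b)), Gen (i, k, a * b)) | i j k a b.
         i \<in> ind3 \<and> j \<in> ind3 \<and> k \<in> ind3 \<and> i \<noteq> j \<and> j \<noteq> k \<and> i \<noteq> k}
   \<union> {(Brk (Gen (i, j, a)) (Gen (k, i, b)), Neg (Gen (k, j, b * a))) | i j k a b.
         i \<in> ind3 \<and> j \<in> ind3 \<and> k \<in> ind3 \<and> i \<noteq> j \<and> j \<noteq> k \<and> i \<noteq> k}
   \<union> {(Brk (Gen (i, j, a)) (Gen (k, l, b)), Zero) | i j k l a b.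
         i \<in> ind3 \<and> j \<in> ind3 \<and> k \<in> ind3 \<and> l \<in> ind3 \<and> i \<noteq> j \<and> k \<noteq> l
         \<and> j \<noteq> k \<and> i \<noteq> l}"

datatype ('r, 'u) sgen = SX nat nat 'r | SU 'u

definition sharp_gens :: "('r, 'u) sgen set" where
  "sharp_gens = {SX i j a | i j a. i \<in> ind3 \<and> j \<in> ind3 \<and> i \<noteq> j} \<union> range SU"

definition sharp_rels ::
  "('k::comm_ring_1 \<Rightarrow> 'r::ring_1 \<Rightarrow> 'r) \<Rightarrow> ('k \<Rightarrow> 'q::ab_group_add \<Rightarrow> 'q) \<Rightarrow> ('r \<Rightarrow> 'q) \<Rightarrow>
   ((('r, uidx \<Rightarrow> 'q) sgen, 'k) lexpr \<times> (('r, uidx \<Rightarrow> 'q) sgen, 'k) lexpr) set" where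
  "sharp_rels scr scq bar =
     {(Gen (SX i j (a + b)), Add (Gen (SX i j a)) (Gen (SX i j b))) | i j a b.
         i \<in> ind3 \<and> j \<in> ind3 \<and> i \<noteq> j}
   \<union> {(Gen (SX i j (scr c a)), Scl c (Gen (SX i j a))) | i j c a.
         i \<in> ind3 \<and> j \<in> ind3 \<and> i \<noteq> j}
   \<union> {(Gen (SU (u + v)), Add (Gen (SU u)) (Gen (SU v))) | u v. True}
   \<union> {(Gen (SU (uscale scq c u)), Scl c (Gen (SU u))) | c u. True}
   \<union> {(Brk (Gen (SX i j a)) (Gen (SX j k b)), Gen (SX i k (a * b))) | i j k a b.
         i \<in> ind3 \<and> j \<in> ind3 \<and> k \<in> ind3 \<and> i \<noteq> j \<and> j \<noteq> k \<and> i \<noteq> k}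
   \<union> {(Brk (Gen (SX j k b)) (Gen (SX i j a)), Neg (Gen (SX i k (a * b)))) | i j k a b.
         i \<in> ind3 \<and> j \<in> ind3 \<and> k \<in> ind3 \<and> i \<noteq> j \<and> j \<noteq> k \<and> i \<noteq> k}
   \<union> {(Brk (Gen (SX i j a)) (Gen (SU u)), Zero) | i j a u.
         i \<in> ind3 \<and> j \<in> ind3 \<and> i \<noteq> j}
   \<union> {(Brk (Gen (SU u)) (Gen (SX i j a)), Zero) | i j a u.
         i \<in> ind3 \<and> j \<in> ind3 \<and> i \<noteq> j}
   \<union> {(Brk (Gen (SX i j a)) (Gen (SX i j b)), Zero) | i j a b.
         i \<in> ind3 \<and> j \<in> ind3 \<and> i \<noteq> j}
   \<union> {(Brk (Gen (SX i j a)) (Gen (SX i k b)), Gen (SU (sign j k (uvec (upos i) (bar (a * b))))))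
         | i j k a b. i \<in> ind3 \<and> j \<in> ind3 \<and> k \<in> ind3 \<and> i \<noteq> j \<and> j \<noteq> k \<and> i \<noteq> k}
   \<union> {(Brk (Gen (SX i j a)) (Gen (SX k j b)), Gen (SU (sign i k (uvec (uneg j) (bar (a * b))))))
         | i j k a b. i \<in> ind3 \<and> j \<in> ind3 \<and> k \<in> ind3 \<and> i \<noteq> j \<and> j \<noteq> k \<and> i \<noteq> k}"

definition hat_sc :: "('k \<Rightarrow> 'q \<Rightarrow> 'q) \<Rightarrow> ('k \<Rightarrow> 'l \<Rightarrow> 'l) \<Rightarrow>
    'k \<Rightarrow> (uidx \<Rightarrow> 'q) \<times> 'l \<Rightarrow> (uidx \<Rightarrow> 'q) \<times> 'l" where
  "hat_sc scq scl c p = (uscale scq c (fst p), scl c (snd p))"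

definition hat_br :: "('l \<Rightarrow> 'l \<Rightarrow> uidx \<Rightarrow> 'q) \<Rightarrow> ('l \<Rightarrow> 'l \<Rightarrow> 'l) \<Rightarrow>
    (uidx \<Rightarrow> 'q) \<times> 'l \<Rightarrow> (uidx \<Rightarrow> 'q) \<times> 'l \<Rightarrow> (uidx \<Rightarrow> 'q) \<times> 'l" where
  "hat_br psi brl p p' = (psi (snd p) (snd p'), brl (snd p) (snd p'))"

end

theory Submission
  imports Defs
begin
lemma leib_facts:
  assumes "leibniz sc br"
  shows "br 0 x = 0" "br x 0 = 0" "br (-x) y = - br x y" "br x (-y) = - br x y"
    "br (x - y) z = br x z - br y z" "br x (y - z) = br x y - br x z"
proof -
  have l: "additive (\<lambda>x. br x z)" for z using assms by unfold_locales (simp add: leibniz_def)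
  have r: "additive (\<lambda>y. br x y)" for x using assms by unfold_locales (simp add: leibniz_def)
  show "br 0 x = 0" using additive.zero[OF l] .
  show "br x 0 = 0" using additive.zero[OF r] .
  show "br (-x) y = - br x y" using additive.minus[OF l] .
  show "br x (-y) = - br x y" using additive.minus[OF r] .
  show "br (x - y) z = br x z - br y z" using additive.diff[OF l] .
  show "br x (y - z) = br x y - br x z" using additive.diff[OF r] .
qed

lemma lder_W:
  assumes L: "leibniz sc br"
   and W0: "0 \<in> W" and Wadd: "\<And>x y. x\<in>W \<Longrightarrow> y\<in>W \<Longrightarrow> x+y \<in> W"
   and Wneg: "\<And>x. x\<in>W \<Longrightarrow> -x \<in> W"
   and Wsc: "\<And>c x. x \<in> W \<Longrightarrow> sc c x \<in> W"
   and Wc: "\<And>x w. w \<in> W \<Longrightarrow> br x w = 0 \<and> br w x = 0"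
   and E: "\<And>a b. (a,b) \<in> E \<Longrightarrow> leval sc br g a - leval sc br g b \<in> W"
   and d: "lder E e f"
  shows "leval sc br g e - leval sc br g f \<in> W"
  using d
proof induction
  case (rel e f) then show ?case by (rule E)
next
  case (refl e) then show ?case using W0 by simp
next
  case (sym e f) then show ?case using Wneg[OF sym(2)] by simp
next
  case (trans e f h) then show ?case using Wadd[OF trans(3) trans(4)] by simp
next
  case (cong_add e e' f f')
  have h: "leval sc br g (Add e f) - leval sc br g (Add e' f') =
     (leval sc br g e - leval sc br g e') + (leval sc br g f - leval sc br g f')" by (simp add: algebra_simps)
  show ?case unfolding h by (rule Wadd[OF cong_add(3) cong_add(4)])
next
  case (cong_neg e e')
  then show ?case using Wneg[OF cong_neg(2)] by (simp add: algebra_simps)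
next
  case (cong_scl e e' c)
  have M: "module sc" using L by (simp add: leibniz_def)
  have "leval sc br g (Scl c e) - leval sc br g (Scl c e') = sc c (leval sc br g e - leval sc br g e')"
    by (simp add: module.scale_right_diff_distrib[OF M])
  then show ?case using Wsc[OF cong_scl(2)] by simp
next
  case (cong_brk e e' f f')
  let ?v = "leval sc br g"
  have "?v (Brk e f) - ?v (Brk e' f') = br (?v e - ?v e') (?v f) + br (?v e') (?v f - ?v f')"
    by (simp add: leib_facts[OF L])
  also have "\<dots> = 0" using Wc[OF cong_brk(3)] Wc[OF cong_brk(4)] by simp
  finally show ?case using W0 by simp
next
  case (add_assoc e f h) then show ?case using W0 by (simp add: algebra_simps)
next
  case (add_comm e f) then show ?case using W0 by (simp add: algebra_simps)
next
  case (add_zero e) then show ?case using W0 by (simp add: algebra_simps)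
next
  case (add_neg e) then show ?case using W0 by (simp add: algebra_simps)
next
  case (scl_add c e f)
  have M: "module sc" using L by (simp add: leibniz_def)
  show ?case using W0 by (simp add: module.scale_right_distrib[OF M])
next
  case (add_scl c d e)
  have M: "module sc" using L by (simp add: leibniz_def)
  show ?case using W0 by (simp add: module.scale_left_distrib[OF M])
next
  case (scl_scl c d e)
  have M: "module sc" using L by (simp add: leibniz_def)
  show ?case using W0 by (simp add: module.scale_scale[OF M])
next
  case (scl_one e)
  have M: "module sc" using L by (simp add: leibniz_def)
  show ?case using W0 by (simp add: module.scale_one[OF M])
next
  case (brk_add_l e f h) then show ?case using W0 L by (simp add: leibniz_def)
next
  case (brk_add_r e f h) then show ?case using W0 L by (simp add: leibniz_def)
next
  case (brk_scl_l c e f) then show ?case using W0 L by (simp add: leibniz_def)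
next
  case (brk_scl_r e c f) then show ?case using W0 L by (simp add: leibniz_def)
next
  case (leibniz_id e f h) then show ?case using W0 L by (simp add: leibniz_def)
qed

lemma hom_zero: "leibniz_hom sc br sc' br' f \<Longrightarrow> f 0 = (0::'b::ab_group_add)"
  unfolding leibniz_hom_def
  by (metis add_cancel_right_right add.right_neutral)

lemma hom_neg: "leibniz_hom sc br sc' br' f \<Longrightarrow> f (- x) = - (f x :: 'b::ab_group_add)"
  using hom_zero[of sc br sc' br' f] unfolding leibniz_hom_def
  by (metis add.right_inverse add_eq_0_iff2 minus_unique)

lemma hom_leval_eq:
  assumes "leibniz_hom sc br sc' br' f" "leibniz_hom sc br sc' br' f'"
    and "\<forall>x\<in>gens e. f (g x) = f' (g x)"
  shows "f (leval sc br g e) = f' (leval sc br g e)"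
  using assms(3)
proof (induction e)
  case Zero then show ?case using hom_zero[OF assms(1)] hom_zero[OF assms(2)] by simp
next
  case (Neg e) then show ?case using hom_neg[OF assms(1)] hom_neg[OF assms(2)] by simp
qed (use assms(1,2) in \<open>auto simp: leibniz_hom_def\<close>)

lemma presents_rel:
  assumes "presents sc br g G E" "(e, f) \<in> E" "gens e \<subseteq> G" "gens f \<subseteq> G"
  shows "leval sc br g e = leval sc br g f"
  using assms lder.rel[of e f E] unfolding presents_def by blast

theorem lemma4p3:
  fixes scR :: "'k::comm_ring_1 \<Rightarrow> 'r::ring_1 \<Rightarrow> 'r"
    and scQ :: "'k \<Rightarrow> 'q::ab_group_add \<Rightarrow> 'q"
    and bar :: "'r \<Rightarrow> 'q"
    and scL :: "'k \<Rightarrow> 'l::ab_group_add \<Rightarrow> 'l"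
    and brL :: "'l \<Rightarrow> 'l \<Rightarrow> 'l"
    and X :: "nat \<Rightarrow> nat \<Rightarrow> 'r \<Rightarrow> 'l"
    and psi :: "'l \<Rightarrow> 'l \<Rightarrow> uidx \<Rightarrow> 'q"
    and scS :: "'k \<Rightarrow> 's::ab_group_add \<Rightarrow> 's"
    and brS :: "'s \<Rightarrow> 's \<Rightarrow> 's"
    and gS :: "('r, uidx \<Rightarrow> 'q) sgen \<Rightarrow> 's"
  assumes R_module: "module scR"
    and R_algebra: "\<forall>c a b. scR c (a * b) = scR c a * b \<and> scR c (a * b) = a * scR c b"
    and R_free: "\<exists>B. 1 \<in> B \<and> \<not> module.dependent scR B \<and> module.span scR B = UNIV"
    (* R_3 = R/(3R + R[R,R]) as a K-module, with quotient map bar *)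
    and Q_module: "module scQ"
    and bar_add: "\<forall>a b. bar (a + b) = bar a + bar b"
    and bar_scale: "\<forall>c a. bar (scR c a) = scQ c (bar a)"
    and bar_surj: "surj bar"
    and bar_kernel: "\<forall>a. bar a = 0 \<longleftrightarrow> a \<in> I3 scR"
    (* stl_3(R) *)
    and stl: "presents scL brL (\<lambda>(i, j, a). X i j a) stl_gens (stl_rels scR)"
    (* the cocycle psi *)
    and psi_add_l: "\<forall>x y z. psi (x + y) z = psi x z + psi y z"
    and psi_add_r: "\<forall>x y z. psi x (y + z) = psi x y + psi x z"
    and psi_scl_l: "\<forall>c x y. psi (scL c x) y = uscale scQ c (psi x y)"
    and psi_scl_r: "\<forall>c x y. psi x (scL c y) = uscale scQ c (psi x y)"
    and psi_row: "\<forall>i j k a b. i \<in> ind3 \<and> j \<in> ind3 \<and> k \<in> ind3 \<and> i \<noteq> j \<and> j \<noteq> k \<and> i \<noteq> k \<longrightarrow>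
        psi (X i j a) (X i k b) = sign j k (uvec (upos i) (bar (a * b)))"
    and psi_col: "\<forall>i j k a b. i \<in> ind3 \<and> j \<in> ind3 \<and> k \<in> ind3 \<and> i \<noteq> j \<and> j \<noteq> k \<and> i \<noteq> k \<longrightarrow>
        psi (X i j a) (X k j b) = sign i k (uvec (uneg j) (bar (a * b)))"
    and psi_other: "\<forall>i j k l a b. i \<in> ind3 \<and> j \<in> ind3 \<and> k \<in> ind3 \<and> l \<in> ind3 \<and> i \<noteq> j \<and> k \<noteq> l
        \<and> \<not> (i = k \<and> j \<noteq> l) \<and> \<not> (j = l \<and> i \<noteq> k) \<longrightarrow> psi (X i j a) (X k l b) = 0"
    and psi_H: "\<forall>h \<in> module.span scL {brL (X i j a) (X j i b) | i j a b. i \<in> ind3 \<and> j \<in> ind3 \<and> i \<noteq> j}.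
        \<forall>x. psi h x = 0 \<and> psi x h = 0"
    and psi_cocycle: "\<forall>x y z. psi x (brL y z) = psi (brL x y) z - psi (brL x z) y"
    (* stl_3(R)^sharp *)
    and sharp: "presents scS brS gS sharp_gens (sharp_rels scR scQ bar)"
  shows "(\<exists>!\<rho>. leibniz_hom scS brS (hat_sc scQ scL) (hat_br psi brL) \<rho>
            \<and> (\<forall>i j a. i \<in> ind3 \<and> j \<in> ind3 \<and> i \<noteq> j \<longrightarrow> \<rho> (gS (SX i j a)) = (0, X i j a))
            \<and> (\<forall>u. \<rho> (gS (SU u)) = (u, 0)))
       \<and> (\<forall>\<rho>. leibniz_hom scS brS (hat_sc scQ scL) (hat_br psi brL) \<rho>
            \<and> (\<forall>i j a. i \<in> ind3 \<and> j \<in> ind3 \<and> i \<noteq> j \<longrightarrow> \<rho> (gS (SX i j a)) = (0, X i j a))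
            \<and> (\<forall>u. \<rho> (gS (SU u)) = (u, 0))
          \<longrightarrow> bij \<rho>)"
proof -
  have LS: "leibniz scS brS"
    and genS: "\<forall>x. \<exists>e. gens e \<subseteq> sharp_gens \<and> leval scS brS gS e = x"
    and presS: "\<forall>e f. gens e \<subseteq> sharp_gens \<longrightarrow> gens f \<subseteq> sharp_gens \<longrightarrow>
            (leval scS brS gS e = leval scS brS gS f \<longleftrightarrow> lder (sharp_rels scR scQ bar) e f)"
    using sharp unfolding presents_def by auto
  have LL: "leibniz scL brL"
    and genL: "\<forall>x. \<exists>e. gens e \<subseteq> stl_gens \<and> leval scL brL (\<lambda>(i, j, a). X i j a) e = x"
    and presL: "\<forall>e f. gens e \<subseteq> stl_gens \<longrightarrow> gens f \<subseteq> stl_gens \<longrightarrow>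
            (leval scL brL (\<lambda>(i, j, a). X i j a) e = leval scL brL (\<lambda>(i, j, a). X i j a) f
              \<longleftrightarrow> lder (stl_rels scR) e f)"
    using stl unfolding presents_def by auto
  have MSm: "module scS" using LS by (simp add: leibniz_def)
  have MLm: "module scL" using LL by (simp add: leibniz_def)
  have S_badd: "brS (x + y) z = brS x z + brS y z" "brS x (y + z) = brS x y + brS x z"
    and S_bsc: "brS (scS c x) y = scS c (brS x y)" "brS x (scS c y) = scS c (brS x y)"
    and S_lid: "brS x (brS y z) = brS (brS x y) z - brS (brS x z) y" for x y z c
    using LS by (simp_all add: leibniz_def)
  note S_f = leib_facts[OF LS]
  have sgX: "SX i j a \<in> sharp_gens \<longleftrightarrow> i \<in> ind3 \<and> j \<in> ind3 \<and> i \<noteq> j" for i j a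
    by (auto simp: sharp_gens_def)
  have sgU: "SU u \<in> sharp_gens" for u by (simp add: sharp_gens_def)
  have stg: "(i, j, a) \<in> stl_gens \<longleftrightarrow> i \<in> ind3 \<and> j \<in> ind3 \<and> i \<noteq> j" for i j a
    by (simp add: stl_gens_def)
  note relS = presents_rel[OF sharp]
  note relL = presents_rel[OF stl]
  have S1: "i \<in> ind3 \<and> j \<in> ind3 \<and> i \<noteq> j \<Longrightarrow> gS (SX i j (a + b)) = gS (SX i j a) + gS (SX i j b)" for i j a b
    using relS[of "Gen (SX i j (a + b))" "Add (Gen (SX i j a)) (Gen (SX i j b))"]
    by (simp add: sgX) (simp add: sharp_rels_def)
  have S2: "i \<in> ind3 \<and> j \<in> ind3 \<and> i \<noteq> j \<Longrightarrow> gS (SX i j (scR c a)) = scS c (gS (SX i j a))" for i j c a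
    using relS[of "Gen (SX i j (scR c a))" "Scl c (Gen (SX i j a))"]
    by (simp add: sgX) (simp add: sharp_rels_def)
  have U_add: "gS (SU (u + v)) = gS (SU u) + gS (SU v)" for u v
    using relS[of "Gen (SU (u + v))" "Add (Gen (SU u)) (Gen (SU v))"]
    by (simp add: sgU) (simp add: sharp_rels_def)
  have U_sc: "gS (SU (uscale scQ c u)) = scS c (gS (SU u))" for c u
    using relS[of "Gen (SU (uscale scQ c u))" "Scl c (Gen (SU u))"]
    by (simp add: sgU) (simp add: sharp_rels_def)
  have S5: "i \<in> ind3 \<and> j \<in> ind3 \<and> k \<in> ind3 \<and> i \<noteq> j \<and> j \<noteq> k \<and> i \<noteq> k \<Longrightarrow>
      brS (gS (SX i j a)) (gS (SX j k b)) = gS (SX i k (a * b))" for i j k a b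
    using relS[of "Brk (Gen (SX i j a)) (Gen (SX j k b))" "Gen (SX i k (a * b))"]
    by (simp add: sgX) (simp add: sharp_rels_def)
  have S6: "i \<in> ind3 \<and> j \<in> ind3 \<and> k \<in> ind3 \<and> i \<noteq> j \<and> j \<noteq> k \<and> i \<noteq> k \<Longrightarrow>
      brS (gS (SX j k b)) (gS (SX i j a)) = - gS (SX i k (a * b))" for i j k a b
    using relS[of "Brk (Gen (SX j k b)) (Gen (SX i j a))" "Neg (Gen (SX i k (a * b)))"]
    by (simp add: sgX) (simp add: sharp_rels_def)
  have S7: "i \<in> ind3 \<and> j \<in> ind3 \<and> i \<noteq> j \<Longrightarrow> brS (gS (SX i j a)) (gS (SU u)) = 0" for i j a u
    using relS[of "Brk (Gen (SX i j a)) (Gen (SU u))" Zero]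
    by (simp add: sgX sgU) (simp add: sharp_rels_def)
  have S8: "i \<in> ind3 \<and> j \<in> ind3 \<and> i \<noteq> j \<Longrightarrow> brS (gS (SU u)) (gS (SX i j a)) = 0" for i j a u
    using relS[of "Brk (Gen (SU u)) (Gen (SX i j a))" Zero]
    by (simp add: sgX sgU) (simp add: sharp_rels_def)
  have S9: "i \<in> ind3 \<and> j \<in> ind3 \<and> i \<noteq> j \<Longrightarrow> brS (gS (SX i j a)) (gS (SX i j b)) = 0" for i j a b
    using relS[of "Brk (Gen (SX i j a)) (Gen (SX i j b))" Zero]
    by (simp add: sgX) (simp add: sharp_rels_def)
  have S10: "i \<in> ind3 \<and> j \<in> ind3 \<and> k \<in> ind3 \<and> i \<noteq> j \<and> j \<noteq> k \<and> i \<noteq> k \<Longrightarrow>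
      brS (gS (SX i j a)) (gS (SX i k b)) = gS (SU (sign j k (uvec (upos i) (bar (a * b)))))" for i j k a b
    using relS[of "Brk (Gen (SX i j a)) (Gen (SX i k b))" "Gen (SU (sign j k (uvec (upos i) (bar (a * b)))))"]
    by (simp add: sgX sgU) (simp add: sharp_rels_def)
  have S11: "i \<in> ind3 \<and> j \<in> ind3 \<and> k \<in> ind3 \<and> i \<noteq> j \<and> j \<noteq> k \<and> i \<noteq> k \<Longrightarrow>
      brS (gS (SX i j a)) (gS (SX k j b)) = gS (SU (sign i k (uvec (uneg j) (bar (a * b)))))" for i j k a b
    using relS[of "Brk (Gen (SX i j a)) (Gen (SX k j b))" "Gen (SU (sign i k (uvec (uneg j) (bar (a * b)))))"]
    by (simp add: sgX sgU) (simp add: sharp_rels_def)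
  have U0: "gS (SU 0) = 0" using U_add[of 0 0] by simp
  have U0': "gS (SU (\<lambda>a. 0)) = 0" using U0 by (simp add: zero_fun_def)
  have U_neg: "gS (SU (- u)) = - gS (SU u)" for u
    using U_add[of "- u" u] U0 by (simp add: eq_neg_iff_add_eq_0)
  have Qm: "module scQ" by (rule Q_module)
  have ind3E: "i \<in> ind3 \<Longrightarrow> i = 1 \<or> i = 2 \<or> i = (3::nat)" for i by (simp add: ind3_def)
  have ind3I: "1 \<in> ind3" "2 \<in> ind3" "3 \<in> ind3" by (simp_all add: ind3_def)
  have uvec_br: "\<exists>i j a i' j' b. i \<in> ind3 \<and> j \<in> ind3 \<and> i \<noteq> j \<and> i' \<in> ind3 \<and> j' \<in> ind3 \<and> i' \<noteq> j'
      \<and> gS (SU (uvec m q)) = brS (gS (SX i j a)) (gS (SX i' j' b))" for m q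
  proof -
    obtain r where r: "q = bar r" using bar_surj by (metis surjD)
    have r1: "q = bar (r * 1)" using r by simp
    show ?thesis
    proof (cases m)
      case P1
      have "gS (SU (uvec m q)) = brS (gS (SX 1 2 r)) (gS (SX 1 3 1))"
        using S10[of 1 2 3 r 1] ind3I unfolding P1 r1 by (simp add: sign_def upos_def)
      then show ?thesis using ind3I
        by (intro exI[of _ "1::nat"] exI[of _ "2::nat"] exI[of _ r] exI[of _ "1::nat"] exI[of _ "3::nat"] exI[of _ "1::'r"]) simp
    next
      case P2
      have "gS (SU (uvec m q)) = brS (gS (SX 2 1 r)) (gS (SX 2 3 1))"
        using S10[of 2 1 3 r 1] ind3I unfolding P2 r1 by (simp add: sign_def upos_def)
      then show ?thesis using ind3I
        by (intro exI[of _ "2::nat"] exI[of _ "1::nat"] exI[of _ r] exI[of _ "2::nat"] exI[of _ "3::nat"] exI[of _ "1::'r"]) simp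
    next
      case P3
      have "gS (SU (uvec m q)) = brS (gS (SX 3 1 r)) (gS (SX 3 2 1))"
        using S10[of 3 1 2 r 1] ind3I unfolding P3 r1 by (simp add: sign_def upos_def)
      then show ?thesis using ind3I
        by (intro exI[of _ "3::nat"] exI[of _ "1::nat"] exI[of _ r] exI[of _ "3::nat"] exI[of _ "2::nat"] exI[of _ "1::'r"]) simp
    next
      case M1
      have "gS (SU (uvec m q)) = brS (gS (SX 2 1 r)) (gS (SX 3 1 1))"
        using S11[of 2 1 3 r 1] ind3I unfolding M1 r1 by (simp add: sign_def uneg_def)
      then show ?thesis using ind3I
        by (intro exI[of _ "2::nat"] exI[of _ "1::nat"] exI[of _ r] exI[of _ "3::nat"] exI[of _ "1::nat"] exI[of _ "1::'r"]) simp
    next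
      case M2
      have "gS (SU (uvec m q)) = brS (gS (SX 1 2 r)) (gS (SX 3 2 1))"
        using S11[of 1 2 3 r 1] ind3I unfolding M2 r1 by (simp add: sign_def uneg_def)
      then show ?thesis using ind3I
        by (intro exI[of _ "1::nat"] exI[of _ "2::nat"] exI[of _ r] exI[of _ "3::nat"] exI[of _ "2::nat"] exI[of _ "1::'r"]) simp
    next
      case M3
      have "gS (SU (uvec m q)) = brS (gS (SX 1 3 r)) (gS (SX 2 3 1))"
        using S11[of 1 3 2 r 1] ind3I unfolding M3 r1 by (simp add: sign_def uneg_def)
      then show ?thesis using ind3I
        by (intro exI[of _ "1::nat"] exI[of _ "3::nat"] exI[of _ r] exI[of _ "2::nat"] exI[of _ "3::nat"] exI[of _ "1::'r"]) simp
    qed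
  qed
  have vdec: "v = uvec P1 (v P1) + (uvec P2 (v P2) + (uvec P3 (v P3) + (uvec M1 (v M1) +
      (uvec M2 (v M2) + uvec M3 (v M3)))))" for v :: "uidx \<Rightarrow> 'q"
    by (rule ext, case_tac x) (simp_all add: uvec_def)
  have L1: "brS z (gS (SU v)) = 0"
    if Z: "\<forall>i j a. i \<in> ind3 \<and> j \<in> ind3 \<and> i \<noteq> j \<longrightarrow> brS z (gS (SX i j a)) = 0" for z v
  proof -
    have one: "brS z (gS (SU (uvec m q))) = 0" for m q
    proof -
      obtain i j a i' j' b where v: "i \<in> ind3 \<and> j \<in> ind3 \<and> i \<noteq> j" "i' \<in> ind3 \<and> j' \<in> ind3 \<and> i' \<noteq> j'"
        and e: "gS (SU (uvec m q)) = brS (gS (SX i j a)) (gS (SX i' j' b))"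
        using uvec_br by blast
      show ?thesis unfolding e S_lid using Z v by (simp add: S_f)
    qed
    have "gS (SU v) = gS (SU (uvec P1 (v P1))) + (gS (SU (uvec P2 (v P2))) + (gS (SU (uvec P3 (v P3))) +
       (gS (SU (uvec M1 (v M1))) + (gS (SU (uvec M2 (v M2))) + gS (SU (uvec M3 (v M3)))))))"
      by (subst vdec) (simp only: U_add)
    then show ?thesis by (simp add: S_badd one)
  qed
  have UU: "brS (gS (SU u)) (gS (SU v)) = 0" for u v
    using L1 S8 by blast
  have C1: "brS (gS (SU u)) s = 0" for u s
  proof -
    obtain e where e: "gens e \<subseteq> sharp_gens" "leval scS brS gS e = s" using genS by blast
    have "brS (gS (SU u)) (leval scS brS gS e) = 0" using e(1)
    proof (induction e)
      case (Gen g) then show ?case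
        by (cases g) (auto simp: sgX S8 UU)
    next
      case (Brk e f) then show ?case by (simp add: S_lid S_f)
    qed (simp_all add: S_f S_badd S_bsc module.scale_zero_right[OF MSm])
    then show ?thesis using e by simp
  qed
  have C2: "brS s (gS (SU u)) = 0" for u s
  proof -
    obtain e where e: "gens e \<subseteq> sharp_gens" "leval scS brS gS e = s" using genS by blast
    have "brS (leval scS brS gS e) (gS (SU u)) = 0" using e(1)
    proof (induction e)
      case (Gen g) then show ?case
        by (cases g) (auto simp: sgX S7 UU)
    next
      case (Brk e f)
      then have "brS (leval scS brS gS e) (gS (SU u)) = 0" "brS (leval scS brS gS f) (gS (SU u)) = 0" by auto
      then show ?case using S_lid[of "leval scS brS gS e" "leval scS brS gS f" "gS (SU u)"]
        by (simp add: S_f)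
    qed (simp_all add: S_f S_badd S_bsc module.scale_zero_right[OF MSm])
    then show ?thesis using e by simp
  qed
  define pi where "pi = leval scS brS (\<lambda>(i, j, a). gS (SX i j a))"
  define UUs where "UUs = range (\<lambda>u. gS (SU u))"
  have UUs0: "0 \<in> UUs" unfolding UUs_def using U0 by (metis rangeI)
  have key: "pi e - pi f \<in> UUs" if d: "lder (stl_rels scR) e f" for e f
    unfolding pi_def
  proof (rule lder_W[OF LS _ _ _ _ _ _ d])
    show "0 \<in> UUs" by (rule UUs0)
    show "x + y \<in> UUs" if "x \<in> UUs" "y \<in> UUs" for x y
      using that unfolding UUs_def by (auto simp: U_add[symmetric])
    show "- x \<in> UUs" if "x \<in> UUs" for x
      using that unfolding UUs_def by (auto simp: U_neg[symmetric])
    show "scS c x \<in> UUs" if "x \<in> UUs" for c x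
      using that unfolding UUs_def by (auto simp: U_sc[symmetric])
    show "brS x w = 0 \<and> brS w x = 0" if "w \<in> UUs" for x w
      using that unfolding UUs_def by (auto simp: C1 C2)
    show "leval scS brS (\<lambda>(i, j, a). gS (SX i j a)) a - leval scS brS (\<lambda>(i, j, a). gS (SX i j a)) b \<in> UUs"
      if ab: "(a, b) \<in> stl_rels scR" for a b
    proof -
      have Uin: "gS (SU u) \<in> UUs" for u unfolding UUs_def by simp
      from ab show ?thesis unfolding stl_rels_def
      proof (elim UnE)
        assume "(a, b) \<in> {(Gen (i, j, a + b), Add (Gen (i, j, a)) (Gen (i, j, b))) | i j a b.
         i \<in> ind3 \<and> j \<in> ind3 \<and> i \<noteq> j}"
        then show ?thesis using UUs0 by (auto simp: S1)
      next
        assume "(a, b) \<in> {(Gen (i, j, scR c a), Scl c (Gen (i, j, a))) | i j c a.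
         i \<in> ind3 \<and> j \<in> ind3 \<and> i \<noteq> j}"
        then show ?thesis using UUs0 by (auto simp: S2)
      next
        assume "(a, b) \<in> {(Brk (Gen (i, j, a)) (Gen (j, k, b)), Gen (i, k, a * b)) | i j k a b.
         i \<in> ind3 \<and> j \<in> ind3 \<and> k \<in> ind3 \<and> i \<noteq> j \<and> j \<noteq> k \<and> i \<noteq> k}"
        then show ?thesis using UUs0 by (auto simp: S5)
      next
        assume "(a, b) \<in> {(Brk (Gen (i, j, a)) (Gen (k, i, b)), Neg (Gen (k, j, b * a))) | i j k a b.
         i \<in> ind3 \<and> j \<in> ind3 \<and> k \<in> ind3 \<and> i \<noteq> j \<and> j \<noteq> k \<and> i \<noteq> k}"
        then obtain i j k x y where "a = Brk (Gen (i, j, x)) (Gen (k, i, y))" "b = Neg (Gen (k, j, y * x))"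
          "i \<in> ind3 \<and> j \<in> ind3 \<and> k \<in> ind3 \<and> i \<noteq> j \<and> j \<noteq> k \<and> i \<noteq> k" by blast
        then show ?thesis using UUs0 S6[of k i j x y] by auto
      next
        assume "(a, b) \<in> {(Brk (Gen (i, j, a)) (Gen (k, l, b)), Zero) | i j k l a b.
         i \<in> ind3 \<and> j \<in> ind3 \<and> k \<in> ind3 \<and> l \<in> ind3 \<and> i \<noteq> j \<and> k \<noteq> l
         \<and> j \<noteq> k \<and> i \<noteq> l}"
        then obtain i j k l x y where ab: "a = Brk (Gen (i, j, x)) (Gen (k, l, y))" "b = Zero"
          and c: "i \<in> ind3 \<and> j \<in> ind3 \<and> k \<in> ind3 \<and> l \<in> ind3 \<and> i \<noteq> j \<and> k \<noteq> l \<and> j \<noteq> k \<and> i \<noteq> l" by blast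
        have "i = k \<or> j = l" using c ind3E by metis
        then consider "i = k" "j = l" | "i = k" "j \<noteq> l" | "j = l" "i \<noteq> k" by blast
        then show ?thesis
        proof cases
          case 1 then show ?thesis using ab c S9[of i j x y] UUs0 by auto
        next
          case 2 then show ?thesis using ab c S10[of i j l x y] Uin by auto
        next
          case 3 then show ?thesis using ab c S11[of i j k x y] Uin by auto
        qed
      qed
    qed
  qed
  have decomp: "\<exists>e0 u. gens e0 \<subseteq> stl_gens \<and> leval scS brS gS e = pi e0 + gS (SU u)"
    if "gens e \<subseteq> sharp_gens" for e
    using that
  proof (induction e)
    case (Gen g)
    show ?case
    proof (cases g)
      case (SX i j a)
      have v: "i \<in> ind3 \<and> j \<in> ind3 \<and> i \<noteq> j" using Gen SX sgX[of i j a] by auto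
      show ?thesis using v unfolding SX
        by (intro exI[of _ "Gen (i, j, a)"] exI[of _ 0]) (simp add: pi_def stg U0')
    next
      case (SU u)
      then show ?thesis by (intro exI[of _ Zero] exI[of _ u]) (simp add: pi_def)
    qed
  next
    case Zero then show ?case by (intro exI[of _ Zero] exI[of _ 0]) (simp add: pi_def U0')
  next
    case (Add e f)
    then obtain e0 u f0 v where h: "gens e0 \<subseteq> stl_gens" "leval scS brS gS e = pi e0 + gS (SU u)"
      "gens f0 \<subseteq> stl_gens" "leval scS brS gS f = pi f0 + gS (SU v)" by auto
    have "leval scS brS gS (Add e f) = pi (Add e0 f0) + gS (SU (u + v))"
      unfolding U_add pi_def leval.simps h(2,4) unfolding pi_def by (simp add: algebra_simps)
    moreover have "gens (Add e0 f0) \<subseteq> stl_gens" using h by simp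
    ultimately show ?case by blast
  next
    case (Neg e)
    then obtain e0 u where h: "gens e0 \<subseteq> stl_gens" "leval scS brS gS e = pi e0 + gS (SU u)" by auto
    have "leval scS brS gS (Neg e) = pi (Neg e0) + gS (SU (- u))"
      unfolding U_neg pi_def leval.simps h(2) unfolding pi_def by (simp add: algebra_simps)
    moreover have "gens (Neg e0) \<subseteq> stl_gens" using h by simp
    ultimately show ?case by blast
  next
    case (Scl c e)
    then obtain e0 u where h: "gens e0 \<subseteq> stl_gens" "leval scS brS gS e = pi e0 + gS (SU u)" by auto
    have "leval scS brS gS (Scl c e) = pi (Scl c e0) + gS (SU (uscale scQ c u))"
      unfolding U_sc pi_def leval.simps h(2) unfolding pi_def by (simp add: module.scale_right_distrib[OF MSm])
    moreover have "gens (Scl c e0) \<subseteq> stl_gens" using h by simp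
    ultimately show ?case by blast
  next
    case (Brk e f)
    then obtain e0 u f0 v where "gens e0 \<subseteq> stl_gens" "leval scS brS gS e = pi e0 + gS (SU u)"
      "gens f0 \<subseteq> stl_gens" "leval scS brS gS f = pi f0 + gS (SU v)" by auto
    then show ?case by (intro exI[of _ "Brk e0 f0"] exI[of _ 0]) (simp add: pi_def U0' S_badd C1 C2)
  qed
  have pi_Zero: "pi Zero = 0" by (simp add: pi_def)
  have bijall: "bij \<rho>"
    if H: "leibniz_hom scS brS (hat_sc scQ scL) (hat_br psi brL) \<rho>"
      and VX: "\<forall>i j a. i \<in> ind3 \<and> j \<in> ind3 \<and> i \<noteq> j \<longrightarrow> \<rho> (gS (SX i j a)) = (0, X i j a)"
      and VU: "\<forall>u. \<rho> (gS (SU u)) = (u, 0)" for \<rho>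
  proof -
    have radd: "\<rho> (x + y) = \<rho> x + \<rho> y" and rsc: "\<rho> (scS c x) = hat_sc scQ scL c (\<rho> x)"
      and rbr: "\<rho> (brS x y) = hat_br psi brL (\<rho> x) (\<rho> y)" for x y c
      using H by (simp_all add: leibniz_hom_def)
    note r0 = hom_zero[OF H] and rneg = hom_neg[OF H]
    have E: "snd (\<rho> (pi e)) = leval scL brL (\<lambda>(i, j, a). X i j a) e" if "gens e \<subseteq> stl_gens" for e
      using that unfolding pi_def
    proof (induction e)
      case (Gen g)
      obtain i j a where g: "g = (i, j, a)" by (cases g) auto
      then show ?case using Gen VX by (simp add: stg)
    qed (simp_all add: radd rneg r0 rsc rbr hat_sc_def hat_br_def)
    have ker: "s = 0" if s0: "\<rho> s = 0" for s
    proof -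
      obtain e where e: "gens e \<subseteq> sharp_gens" "leval scS brS gS e = s" using genS by blast
      obtain e0 u where d: "gens e0 \<subseteq> stl_gens" "s = pi e0 + gS (SU u)" using decomp[OF e(1)] e(2) by auto
      have "\<rho> s = \<rho> (pi e0) + (u, 0)" using d(2) radd VU by simp
      then have "snd (\<rho> (pi e0)) = 0" using s0 by (metis add.right_neutral snd_add snd_conv snd_zero)
      then have "leval scL brL (\<lambda>(i, j, a). X i j a) e0 = leval scL brL (\<lambda>(i, j, a). X i j a) Zero"
        using E[OF d(1)] by simp
      then have "lder (stl_rels scR) e0 Zero" using presL d(1) by (metis empty_subsetI gens.simps(2))
      then have "pi e0 \<in> UUs" using key pi_Zero by fastforce
      then obtain w where w: "pi e0 = gS (SU w)" unfolding UUs_def by auto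
      have s: "s = gS (SU (w + u))" using d(2) w U_add by simp
      have "\<rho> s = (w + u, 0)" using s VU by simp
      then have "w + u = 0" using s0 by (metis fst_conv fst_zero)
      then show ?thesis using s U0 by simp
    qed
    have "inj \<rho>"
    proof (rule injI)
      fix x y assume "\<rho> x = \<rho> y"
      then have "\<rho> (x + - y) = 0" unfolding radd rneg by simp
      then have "x + - y = 0" by (rule ker)
      then show "x = y" by (simp add: add_eq_0_iff2 eq_neg_iff_add_eq_0)
    qed
    moreover have "surj \<rho>"
    proof -
      have "\<exists>s. \<rho> s = p" for p
      proof -
        obtain u x where p: "p = (u, x)" by (cases p) auto
        obtain e where e: "gens e \<subseteq> stl_gens" "leval scL brL (\<lambda>(i, j, a). X i j a) e = x" using genL by blast
        define w where "w = fst (\<rho> (pi e))"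
        have "\<rho> (pi e + gS (SU (u - w))) = \<rho> (pi e) + (u - w, 0)" using radd VU by simp
        also have "\<dots> = (u, x)" using E[OF e(1)] e(2) unfolding w_def by (simp add: prod_eq_iff)
        finally show ?thesis using p by blast
      qed
      then show ?thesis by (metis surjI)
    qed
    ultimately show ?thesis by (simp add: bij_def)
  qed
  have MU: "module (uscale scQ :: 'k \<Rightarrow> (uidx \<Rightarrow> 'q) \<Rightarrow> (uidx \<Rightarrow> 'q))"
    by unfold_locales (simp_all add: uscale_def fun_eq_iff module.scale_right_distrib[OF Q_module]
        module.scale_left_distrib[OF Q_module] module.scale_scale[OF Q_module] module.scale_one[OF Q_module])
  have MH: "module (hat_sc scQ scL)"
    by unfold_locales (simp_all add: hat_sc_def prod_eq_iff module.scale_right_distrib[OF MU]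
        module.scale_left_distrib[OF MU] module.scale_scale[OF MU] module.scale_one[OF MU]
        module.scale_right_distrib[OF MLm]
        module.scale_left_distrib[OF MLm] module.scale_scale[OF MLm] module.scale_one[OF MLm])
  have psi_l: "additive (\<lambda>x. psi x y)" for y by unfold_locales (simp add: psi_add_l)
  have psi_r: "additive (\<lambda>y. psi x y)" for x by unfold_locales (simp add: psi_add_r)
  have psi0: "psi 0 y = 0" "psi x 0 = 0" for x y
    using additive.zero[OF psi_l] additive.zero[OF psi_r] by auto
  have L_badd: "brL (x + y) z = brL x z + brL y z" "brL x (y + z) = brL x y + brL x z"
    and L_bsc: "brL (scL c x) y = scL c (brL x y)" "brL x (scL c y) = scL c (brL x y)"
    and L_lid: "brL x (brL y z) = brL (brL x y) z - brL (brL x z) y" for x y z c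
    using LL by (simp_all add: leibniz_def)
  note L_f = leib_facts[OF LL]
  have LH: "leibniz (hat_sc scQ scL) (hat_br psi brL)"
    unfolding leibniz_def
    by (intro conjI allI MH)
      (simp_all add: hat_br_def hat_sc_def psi_add_l psi_add_r psi_scl_l psi_scl_r psi_cocycle
        L_badd L_bsc L_lid)
  have T1: "i \<in> ind3 \<and> j \<in> ind3 \<and> i \<noteq> j \<Longrightarrow> X i j (a + b) = X i j a + X i j b" for i j a b
    using relL[of "Gen (i, j, a + b)" "Add (Gen (i, j, a)) (Gen (i, j, b))"]
    by (simp add: stg) (simp add: stl_rels_def)
  have T2: "i \<in> ind3 \<and> j \<in> ind3 \<and> i \<noteq> j \<Longrightarrow> X i j (scR c a) = scL c (X i j a)" for i j c a
    using relL[of "Gen (i, j, scR c a)" "Scl c (Gen (i, j, a))"]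
    by (simp add: stg) (simp add: stl_rels_def)
  have T3: "i \<in> ind3 \<and> j \<in> ind3 \<and> k \<in> ind3 \<and> i \<noteq> j \<and> j \<noteq> k \<and> i \<noteq> k \<Longrightarrow>
      brL (X i j a) (X j k b) = X i k (a * b)" for i j k a b
    using relL[of "Brk (Gen (i, j, a)) (Gen (j, k, b))" "Gen (i, k, a * b)"]
    by (simp add: stg) (simp add: stl_rels_def)
  have T4: "i \<in> ind3 \<and> j \<in> ind3 \<and> k \<in> ind3 \<and> i \<noteq> j \<and> j \<noteq> k \<and> i \<noteq> k \<Longrightarrow>
      brL (X i j a) (X k i b) = - X k j (b * a)" for i j k a b
    using relL[of "Brk (Gen (i, j, a)) (Gen (k, i, b))" "Neg (Gen (k, j, b * a))"]
    by (simp add: stg) (simp add: stl_rels_def)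
  have T5: "i \<in> ind3 \<and> j \<in> ind3 \<and> k \<in> ind3 \<and> l \<in> ind3 \<and> i \<noteq> j \<and> k \<noteq> l \<and> j \<noteq> k \<and> i \<noteq> l \<Longrightarrow>
      brL (X i j a) (X k l b) = 0" for i j k l a b
    using relL[of "Brk (Gen (i, j, a)) (Gen (k, l, b))" Zero]
    by (simp add: stg) (simp add: stl_rels_def)
  define gh where "gh = case_sgen (\<lambda>i j a. (0 :: uidx \<Rightarrow> 'q, X i j a)) (\<lambda>u. (u, 0))"
  let ?H = "leval (hat_sc scQ scL) (hat_br psi brL) gh"
  have H5: "hat_br psi brL (0, X i j a) (0, X j k b) = (0, X i k (a * b))"
    if "i \<in> ind3 \<and> j \<in> ind3 \<and> k \<in> ind3 \<and> i \<noteq> j \<and> j \<noteq> k \<and> i \<noteq> k" for i j k a b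
    using that psi_other[rule_format, of i j j k a b] T3[OF that] by (simp add: hat_br_def)
  have H6: "hat_br psi brL (0, X j k b) (0, X i j a) = - (0, X i k (a * b))"
    if "i \<in> ind3 \<and> j \<in> ind3 \<and> k \<in> ind3 \<and> i \<noteq> j \<and> j \<noteq> k \<and> i \<noteq> k" for i j k a b
    using that psi_other[rule_format, of j k i j b a] T4[of j k i b a] by (simp add: hat_br_def)
  have H9: "hat_br psi brL (0, X i j a) (0, X i j b) = 0"
    if "i \<in> ind3 \<and> j \<in> ind3 \<and> i \<noteq> j" for i j a b
    using that psi_other[rule_format, of i j i j a b] T5[of i j i j a b] by (simp add: hat_br_def prod_eq_iff)
  have H10: "hat_br psi brL (0, X i j a) (0, X i k b) = (sign j k (uvec (upos i) (bar (a * b))), 0)"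
    if "i \<in> ind3 \<and> j \<in> ind3 \<and> k \<in> ind3 \<and> i \<noteq> j \<and> j \<noteq> k \<and> i \<noteq> k" for i j k a b
    using that psi_row T5[of i j i k a b] by (simp add: hat_br_def)
  have H11: "hat_br psi brL (0, X i j a) (0, X k j b) = (sign i k (uvec (uneg j) (bar (a * b))), 0)"
    if "i \<in> ind3 \<and> j \<in> ind3 \<and> k \<in> ind3 \<and> i \<noteq> j \<and> j \<noteq> k \<and> i \<noteq> k" for i j k a b
    using that psi_col T5[of i j k j a b] by (simp add: hat_br_def)
  have H78: "hat_br psi brL (0, x) (u, 0) = 0" "hat_br psi brL (u, 0) (0, x) = 0" for x u
    by (simp_all add: hat_br_def psi0 L_f prod_eq_iff)
  have relH: "?H a - ?H b \<in> {0}" if ab: "(a, b) \<in> sharp_rels scR scQ bar" for a b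
    using ab unfolding sharp_rels_def
    apply (elim UnE)
    apply (auto simp: gh_def T1 T2 H5 H6 H9 H10 H11 H78 hat_sc_def module.scale_zero_right[OF MU]
        module.scale_zero_right[OF MLm])
    done
  note LH_f = leib_facts[OF LH]
  have derH: "?H e = ?H f" if "lder (sharp_rels scR scQ bar) e f" for e f
  proof -
    have "?H e - ?H f \<in> {0}"
    proof (rule lder_W[OF LH _ _ _ _ _ _ that])
      show "\<And>c x. x \<in> {0} \<Longrightarrow> hat_sc scQ scL c x \<in> {0}"
        using module.scale_zero_right[OF MH] by auto
      show "\<And>x w. w \<in> {0} \<Longrightarrow> hat_br psi brL x w = 0 \<and> hat_br psi brL w x = 0"
        using LH_f by auto
    qed (use relH in auto)
    then show ?thesis by simp
  qed
  define rho0 where "rho0 = (\<lambda>s. ?H (SOME e. gens e \<subseteq> sharp_gens \<and> leval scS brS gS e = s))"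
  have R0: "rho0 (leval scS brS gS e) = ?H e" if e: "gens e \<subseteq> sharp_gens" for e
  proof -
    let ?e = "SOME e'. gens e' \<subseteq> sharp_gens \<and> leval scS brS gS e' = leval scS brS gS e"
    have "gens ?e \<subseteq> sharp_gens \<and> leval scS brS gS ?e = leval scS brS gS e"
      by (rule someI_ex) (use e in blast)
    then have "lder (sharp_rels scR scQ bar) ?e e" using presS e by blast
    then show ?thesis unfolding rho0_def using derH by blast
  qed
  have hom0: "leibniz_hom scS brS (hat_sc scQ scL) (hat_br psi brL) rho0"
    unfolding leibniz_hom_def
  proof (intro conjI allI)
    fix x y
    obtain ex ey where ex: "gens ex \<subseteq> sharp_gens" "leval scS brS gS ex = x"
      and ey: "gens ey \<subseteq> sharp_gens" "leval scS brS gS ey = y" using genS by meson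
    show "rho0 (x + y) = rho0 x + rho0 y"
      using R0[of "Add ex ey"] R0[OF ex(1)] R0[OF ey(1)] ex ey by simp
    show "rho0 (brS x y) = hat_br psi brL (rho0 x) (rho0 y)"
      using R0[of "Brk ex ey"] R0[OF ex(1)] R0[OF ey(1)] ex ey by simp
  next
    fix c x
    obtain ex where ex: "gens ex \<subseteq> sharp_gens" "leval scS brS gS ex = x" using genS by meson
    show "rho0 (scS c x) = hat_sc scQ scL c (rho0 x)"
      using R0[of "Scl c ex"] R0[OF ex(1)] ex by simp
  qed
  have VX0: "\<forall>i j a. i \<in> ind3 \<and> j \<in> ind3 \<and> i \<noteq> j \<longrightarrow> rho0 (gS (SX i j a)) = (0, X i j a)"
    using R0[of "Gen (SX _ _ _)"] by (auto simp: sgX gh_def)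
  have VU0: "\<forall>u. rho0 (gS (SU u)) = (u, 0)"
    using R0[of "Gen (SU _)"] by (auto simp: sgU gh_def)
  have uniq: "\<rho> = rho0"
    if H: "leibniz_hom scS brS (hat_sc scQ scL) (hat_br psi brL) \<rho>"
      and VX: "\<forall>i j a. i \<in> ind3 \<and> j \<in> ind3 \<and> i \<noteq> j \<longrightarrow> \<rho> (gS (SX i j a)) = (0, X i j a)"
      and VU: "\<forall>u. \<rho> (gS (SU u)) = (u, 0)" for \<rho>
  proof
    fix s
    obtain e where e: "gens e \<subseteq> sharp_gens" "leval scS brS gS e = s" using genS by blast
    have "\<forall>x\<in>gens e. \<rho> (gS x) = rho0 (gS x)"
    proof
      fix x assume "x \<in> gens e"
      then have "x \<in> sharp_gens" using e by auto
      then show "\<rho> (gS x) = rho0 (gS x)" using VX VU VX0 VU0 by (cases x) (auto simp: sgX)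
    qed
    then show "\<rho> s = rho0 s" using hom_leval_eq[OF H hom0] e(2) by blast
  qed
  show ?thesis
    apply (rule conjI)
     apply (rule ex1I[where a=rho0])
      apply (use hom0 VX0 VU0 in blast)
     apply (use uniq in blast)
    apply (use bijall in blast)
    done
qed

end
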